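(* Let $H$ be a separable Hilbert space, $(\Omega,\mathcal{A},\mu)$ a measure space, and $V:H\to L^2_\mu(\Omega)$ an invertible bounded linear operator. Let $G:=V^{\mathsf{T}}V$ and let $d$ be the metric on $H$ given by $$d(x_1,x_2)^2:=\inf_{\gamma\in\Gamma(x_1,x_2)}\int_0^1\langle G\dot\gamma(s),\dot\gamma(s)\rangle_H\,\mathrm{d}s.$$ Let $\mathcal{F}:H\to\mathbb{R}$ be $\tilde\lambda$-convex on $H$ for some $\tilde\lambda\in\mathbb{R}$. Then $\mathcal{F}$ is geodesically $\lambda$-convex with respect to $d$, where $\lambda:=\tilde\lambda\|V\|^{-2}$ if $\tilde\lambda>0$ and $\lambda:=\tilde\lambda\|V^{-1}\|^2$ if $\tilde\lambda\le0$.
   Context: $V^{\mathsf{T}}$ is the Hilbert-space adjoint of $V$; $\|V\|$ and $\|V^{-1}\|$ are the operator norms in $L(H,L^2_\mu(\Omega))$ and $L(L^2_\mu(\Omega),H)$. $\Gamma(x_1,x_2)$ is the set of curves $\gamma\in C^1([0,1],H)$ with $\gamma(0)=x_1,\gamma(1)=x_2$. $\tilde\lambda$-convexity on $H$ means $\mathcal{F}((1-\theta)x_1+\theta x_2)\le(1-\theta)\mathcal{F}(x_1)+\theta\mathcal{F}(x_2)-\tilde\lambda\frac{\theta(1-\theta)}{2}\|x_1-x_2\|_H^2$ for all $x_1,x_2\in H$, $\theta\in[0,1]$. Geodesic $\lambda$-convexity w.r.t. $d$ means: for every constant-speed geodesic $\gamma:[0,1]\to H$ of $(H,d)$ and every $\theta\in[0,1]$,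 $\mathcal{F}(\gamma(\theta))\le(1-\theta)\mathcal{F}(\gamma(0))+\theta\mathcal{F}(\gamma(1))-\lambda\frac{\theta(1-\theta)}{2}d(\gamma(0),\gamma(1))^2$. *)

theory Defs
  imports "HOL-Analysis.Analysis" "HOL-Probability.Probability"
begin

text \<open>Square-integrable real functions on a measure space (representatives of L^2_mu).\<close>
definition sq_int :: "'w measure \<Rightarrow> ('w \<Rightarrow> real) \<Rightarrow> bool" where
  "sq_int M f \<longleftrightarrow> f \<in> borel_measurable M \<and> integrable M (\<lambda>w. (f w)\<^sup>2)"

definition L2_inner :: "'w measure \<Rightarrow> ('w \<Rightarrow> real) \<Rightarrow> ('w \<Rightarrow> real) \<Rightarrow> real" where
  "L2_inner M f g = (\<integral>w. f w * g w \<partial>M)"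

definition L2_norm :: "'w measure \<Rightarrow> ('w \<Rightarrow> real) \<Rightarrow> real" where
  "L2_norm M f = sqrt (\<integral>w. (f w)\<^sup>2 \<partial>M)"

definition bounded_linear_L2 :: "'w measure \<Rightarrow> ('a::real_normed_vector \<Rightarrow> 'w \<Rightarrow> real) \<Rightarrow> bool" where
  "bounded_linear_L2 M V \<longleftrightarrow>
     (\<forall>x. sq_int M (V x)) \<and>
     (\<forall>x y. \<forall>w\<in>space M. V (x + y) w = V x w + V y w) \<and>
     (\<forall>c x. \<forall>w\<in>space M. V (c *\<^sub>R x) w = c * V x w) \<and>
     (\<exists>K. \<forall>x. L2_norm M (V x) \<le> K * norm x)"

definition inverse_L2 :: "'w measure \<Rightarrow> ('a::real_normed_vector \<Rightarrow> 'w \<Rightarrow> real)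
     \<Rightarrow> (('w \<Rightarrow> real) \<Rightarrow> 'a) \<Rightarrow> bool" where
  "inverse_L2 M V W \<longleftrightarrow>
     (\<forall>f g. sq_int M f \<longrightarrow> sq_int M g \<longrightarrow> (AE w in M. f w = g w) \<longrightarrow> W f = W g) \<and>
     (\<forall>f g. sq_int M f \<longrightarrow> sq_int M g \<longrightarrow> W (\<lambda>w. f w + g w) = W f + W g) \<and>
     (\<forall>c f. sq_int M f \<longrightarrow> W (\<lambda>w. c * f w) = c *\<^sub>R W f) \<and>
     (\<exists>K. \<forall>f. sq_int M f \<longrightarrow> norm (W f) \<le> K * L2_norm M f) \<and>
     (\<forall>x. W (V x) = x) \<and>
     (\<forall>f. sq_int M f \<longrightarrow> (AE w in M. V (W f) w = f w))"

definition opnorm_V :: "'w measure \<Rightarrow> ('a::real_normed_vector \<Rightarrow> 'w \<Rightarrow> real) \<Rightarrow> real" where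
  "opnorm_V M V = Sup {L2_norm M (V x) | x. norm x \<le> 1}"

definition opnorm_W :: "'w measure \<Rightarrow> (('w \<Rightarrow> real) \<Rightarrow> 'a::real_normed_vector) \<Rightarrow> real" where
  "opnorm_W M W = Sup {norm (W f) | f. sq_int M f \<and> L2_norm M f \<le> 1}"

definition C1_curves :: "'a::real_normed_vector \<Rightarrow> 'a \<Rightarrow> (real \<Rightarrow> 'a) set" where
  "C1_curves x1 x2 = {\<gamma>. (\<exists>\<gamma>'. (\<forall>s\<in>{0..1}. (\<gamma> has_vector_derivative \<gamma>' s) (at s within {0..1}))
                              \<and> continuous_on {0..1} \<gamma>')
                        \<and> \<gamma> 0 = x1 \<and> \<gamma> 1 = x2}"

definition energy :: "('a::real_inner \<Rightarrow> 'a) \<Rightarrow> (real \<Rightarrow> 'a) \<Rightarrow> real" where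
  "energy G \<gamma> = integral {0..1} (\<lambda>s. inner (G (vector_derivative \<gamma> (at s within {0..1})))
                                          (vector_derivative \<gamma> (at s within {0..1})))"

definition G_dist :: "('a::real_inner \<Rightarrow> 'a) \<Rightarrow> 'a \<Rightarrow> 'a \<Rightarrow> real" where
  "G_dist G x1 x2 = sqrt (Inf (energy G ` C1_curves x1 x2))"

definition cs_geodesic :: "('a \<Rightarrow> 'a \<Rightarrow> real) \<Rightarrow> (real \<Rightarrow> 'a) \<Rightarrow> bool" where
  "cs_geodesic d \<gamma> \<longleftrightarrow>
     (\<forall>s\<in>{0..1}. \<forall>t\<in>{0..1}. d (\<gamma> s) (\<gamma> t) = \<bar>t - s\<bar> * d (\<gamma> 0) (\<gamma> 1))"

definition lambda_convex :: "real \<Rightarrow> ('a::real_normed_vector \<Rightarrow> real) \<Rightarrow> bool" where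
  "lambda_convex l F \<longleftrightarrow>
     (\<forall>x1 x2. \<forall>\<theta>\<in>{0..1}. F ((1 - \<theta>) *\<^sub>R x1 + \<theta> *\<^sub>R x2)
        \<le> (1 - \<theta>) * F x1 + \<theta> * F x2 - l * \<theta> * (1 - \<theta>) / 2 * (norm (x1 - x2))\<^sup>2)"

definition geod_lambda_convex :: "('a \<Rightarrow> 'a \<Rightarrow> real) \<Rightarrow> real \<Rightarrow> ('a \<Rightarrow> real) \<Rightarrow> bool" where
  "geod_lambda_convex d l F \<longleftrightarrow>
     (\<forall>\<gamma>. cs_geodesic d \<gamma> \<longrightarrow> (\<forall>\<theta>\<in>{0..1}. F (\<gamma> \<theta>)
        \<le> (1 - \<theta>) * F (\<gamma> 0) + \<theta> * F (\<gamma> 1) - l * \<theta> * (1 - \<theta>) / 2 * (d (\<gamma> 0) (\<gamma> 1))\<^sup>2))"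

end

theory Submission
  imports Defs
begin


lemma sq_int_mult_integrable:
  assumes "sq_int M f" "sq_int M g"
  shows "integrable M (\<lambda>w. f w * g w)"
proof (rule Bochner_Integration.integrable_bound[where f="\<lambda>w. (f w)\<^sup>2 + (g w)\<^sup>2"])
  show "integrable M (\<lambda>w. (f w)\<^sup>2 + (g w)\<^sup>2)" using assms unfolding sq_int_def by auto
  show "(\<lambda>w. f w * g w) \<in> borel_measurable M" using assms unfolding sq_int_def by auto
  show "AE x in M. norm (f x * g x) \<le> norm ((f x)\<^sup>2 + (g x)\<^sup>2)"
  proof (rule AE_I2)
    fix x
    have "\<bar>f x * g x\<bar> \<le> (f x)\<^sup>2 + (g x)\<^sup>2"
    proof -
      have "0 \<le> (\<bar>f x\<bar> - \<bar>g x\<bar>)\<^sup>2" by simp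
      hence "2 * (\<bar>f x\<bar> * \<bar>g x\<bar>) \<le> (f x)\<^sup>2 + (g x)\<^sup>2"
        by (simp add: power2_eq_square algebra_simps)
      moreover have "0 \<le> \<bar>f x\<bar> * \<bar>g x\<bar>" by simp
      ultimately have "\<bar>f x\<bar> * \<bar>g x\<bar> \<le> (f x)\<^sup>2 + (g x)\<^sup>2" by linarith
      then show ?thesis by (simp add: abs_mult)
    qed
    then show "norm (f x * g x) \<le> norm ((f x)\<^sup>2 + (g x)\<^sup>2)" by simp
  qed
qed

lemma sq_int_cmult: "sq_int M f \<Longrightarrow> sq_int M (\<lambda>w. c * f w)"
  unfolding sq_int_def by (auto simp: power_mult_distrib)

lemma sq_int_zero: "sq_int M (\<lambda>w. 0)"
  unfolding sq_int_def by auto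



lemma G_linear:
  fixes V :: "'a::real_inner \<Rightarrow> 'w \<Rightarrow> real" and G :: "'a \<Rightarrow> 'a"
  assumes BL: "bounded_linear_L2 M V"
    and HG: "\<And>v u. inner (G v) u = L2_inner M (V v) (V u)"
  shows "linear G"
proof -
  have sq: "\<And>x. sq_int M (V x)" using BL unfolding bounded_linear_L2_def by auto
  have add: "\<And>x y w. w \<in> space M \<Longrightarrow> V (x + y) w = V x w + V y w"
    using BL unfolding bounded_linear_L2_def by auto
  have scl: "\<And>c x w. w \<in> space M \<Longrightarrow> V (c *\<^sub>R x) w = c * V x w"
    using BL unfolding bounded_linear_L2_def by auto
  have ia: "inner (G (x + y)) u = inner (G x + G y) u" for x y u
  proof -
    have "inner (G (x + y)) u = (\<integral>w. V x w * V u w + V y w * V u w \<partial>M)"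
      unfolding HG L2_inner_def
      by (rule Bochner_Integration.integral_cong) (auto simp: add algebra_simps)
    also have "\<dots> = (\<integral>w. V x w * V u w \<partial>M) + (\<integral>w. V y w * V u w \<partial>M)"
      by (rule Bochner_Integration.integral_add) (auto intro: sq_int_mult_integrable sq)
    finally show ?thesis by (simp add: inner_add_left HG L2_inner_def)
  qed
  have isc: "inner (G (c *\<^sub>R x)) u = inner (c *\<^sub>R G x) u" for c x u
  proof -
    have "inner (G (c *\<^sub>R x)) u = (\<integral>w. c * (V x w * V u w) \<partial>M)"
      unfolding HG L2_inner_def
      by (rule Bochner_Integration.integral_cong) (auto simp: scl algebra_simps)
    also have "\<dots> = c * (\<integral>w. V x w * V u w \<partial>M)" by simp
    finally show ?thesis by (simp add: HG L2_inner_def)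
  qed
  have ext: "a = b" if "\<And>u. inner a u = inner b u" for a b :: 'a
  proof -
    have "inner (a - b) (a - b) = 0" using that by (simp add: inner_diff_left)
    then show ?thesis by simp
  qed
  show ?thesis
    by (rule linearI) (auto intro: ext ia isc)
qed

lemma G_sym:
  fixes V :: "'a::real_inner \<Rightarrow> 'w \<Rightarrow> real" and G :: "'a \<Rightarrow> 'a"
  assumes HG: "\<And>v u. inner (G v) u = L2_inner M (V v) (V u)"
  shows "inner (G u) v = inner (G v) u"
  unfolding HG L2_inner_def by (simp add: mult.commute)

lemma q_eq:
  fixes V :: "'a::real_inner \<Rightarrow> 'w \<Rightarrow> real" and G :: "'a \<Rightarrow> 'a"
  assumes HG: "\<And>v u. inner (G v) u = L2_inner M (V v) (V u)"
  shows "inner (G v) v = (\<integral>w. (V v w)\<^sup>2 \<partial>M)"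
  unfolding HG L2_inner_def by (simp add: power2_eq_square)

lemma q_nonneg:
  fixes V :: "'a::real_inner \<Rightarrow> 'w \<Rightarrow> real" and G :: "'a \<Rightarrow> 'a"
  assumes HG: "\<And>v u. inner (G v) u = L2_inner M (V v) (V u)"
  shows "0 \<le> inner (G v) v"
  unfolding q_eq[OF HG] by (rule Bochner_Integration.integral_nonneg) simp

lemma q_L2norm:
  fixes V :: "'a::real_inner \<Rightarrow> 'w \<Rightarrow> real" and G :: "'a \<Rightarrow> 'a"
  assumes HG: "\<And>v u. inner (G v) u = L2_inner M (V v) (V u)"
  shows "L2_norm M (V v) = sqrt (inner (G v) v)"
  unfolding q_eq[OF HG] L2_norm_def by simp

lemma q_bound:
  fixes V :: "'a::real_inner \<Rightarrow> 'w \<Rightarrow> real" and G :: "'a \<Rightarrow> 'a"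
  assumes BL: "bounded_linear_L2 M V"
    and HG: "\<And>v u. inner (G v) u = L2_inner M (V v) (V u)"
  obtains K where "\<And>v. inner (G v) v \<le> K * (norm v)\<^sup>2"
proof -
  obtain K where K: "\<And>x. L2_norm M (V x) \<le> K * norm x"
    using BL unfolding bounded_linear_L2_def by auto
  have "inner (G v) v \<le> K\<^sup>2 * (norm v)\<^sup>2" for v
  proof -
    have "sqrt (inner (G v) v) \<le> K * norm v" using K[of v] q_L2norm[OF HG] by simp
    moreover have "0 \<le> sqrt (inner (G v) v)" using q_nonneg[OF HG] by simp
    ultimately have "(sqrt (inner (G v) v))\<^sup>2 \<le> (K * norm v)\<^sup>2"
      by (rule power_mono)
    moreover have "0 \<le> inner (G v) v" by (rule q_nonneg[OF HG])
    ultimately show ?thesis by (simp add: power_mult_distrib)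
  qed
  then show ?thesis using that by blast
qed

lemma q_zero:
  fixes V :: "'a::real_inner \<Rightarrow> 'w \<Rightarrow> real" and G :: "'a \<Rightarrow> 'a"
  assumes BL: "bounded_linear_L2 M V" and IW: "inverse_L2 M V W"
    and HG: "\<And>v u. inner (G v) u = L2_inner M (V v) (V u)"
    and q0: "inner (G v) v = 0"
  shows "v = 0"
proof -
  have sq: "\<And>x. sq_int M (V x)" using BL unfolding bounded_linear_L2_def by auto
  have "integrable M (\<lambda>w. (V v w)\<^sup>2)" using sq[of v] unfolding sq_int_def by auto
  then have "AE w in M. (V v w)\<^sup>2 = 0"
    using q0 unfolding q_eq[OF HG] by (subst (asm) integral_nonneg_eq_0_iff_AE) auto
  then have ae: "AE w in M. V v w = (\<lambda>w. 0 * V v w) w" by auto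
  have "W (V v) = W (\<lambda>w. 0 * V v w)"
    using IW ae sq[of v] sq_int_cmult[OF sq[of v], of 0] unfolding inverse_L2_def by blast
  also have "\<dots> = 0 *\<^sub>R W (V v)" using IW sq[of v] unfolding inverse_L2_def by blast
  finally show ?thesis using IW unfolding inverse_L2_def by simp
qed



lemma q_expand:
  fixes G :: "'a::real_inner \<Rightarrow> 'a"
  assumes LG: "linear G" and SY: "\<And>u v. inner (G u) v = inner (G v) u"
  shows "inner (G (a + b)) (a + b) = inner (G a) a + 2 * inner (G a) b + inner (G b) b"
proof -
  have "G (a + b) = G a + G b" using LG by (simp add: linear_add)
  then show ?thesis using SY[of b a] by (simp add: inner_add_left inner_add_right)
qed

lemma q_cont:
  fixes G :: "'a::real_inner \<Rightarrow> 'a"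
  assumes LG: "linear G" and SY: "\<And>u v. inner (G u) v = inner (G v) u"
    and NN: "\<And>v. 0 \<le> inner (G v) v" and KB: "\<And>v. inner (G v) v \<le> K * (norm v)\<^sup>2"
  shows "isCont (\<lambda>v. inner (G v) v) v0"
proof -
  have eq: "inner (G u) u = inner (G v0) v0 + 2 * inner (G v0) (u - v0) + inner (G (u - v0)) (u - v0)" for u
    using q_expand[OF LG SY, of v0 "u - v0"] by simp
  have t1: "((\<lambda>u. inner (G (u - v0)) (u - v0)) \<longlongrightarrow> 0) (at v0)"
  proof (rule tendsto_sandwich[where f="\<lambda>u. 0" and h="\<lambda>u. K * (norm (u - v0))\<^sup>2"])
    show "\<forall>\<^sub>F u in at v0. 0 \<le> inner (G (u - v0)) (u - v0)" using NN by simp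
    show "\<forall>\<^sub>F u in at v0. inner (G (u - v0)) (u - v0) \<le> K * (norm (u - v0))\<^sup>2" using KB by simp
    show "((\<lambda>u. 0::real) \<longlongrightarrow> 0) (at v0)" by simp
    have "((\<lambda>u. K * (norm (u - v0))\<^sup>2) \<longlongrightarrow> K * (norm (v0 - v0))\<^sup>2) (at v0)"
      by (intro tendsto_intros)
    then show "((\<lambda>u. K * (norm (u - v0))\<^sup>2) \<longlongrightarrow> 0) (at v0)" by simp
  qed
  have t2: "((\<lambda>u. inner (G v0) (u - v0)) \<longlongrightarrow> inner (G v0) (v0 - v0)) (at v0)"
    by (intro tendsto_intros)
  have "((\<lambda>u. inner (G v0) v0 + 2 * inner (G v0) (u - v0) + inner (G (u - v0)) (u - v0))
        \<longlongrightarrow> inner (G v0) v0 + 2 * inner (G v0) (v0 - v0) + 0) (at v0)"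
    by (intro tendsto_intros t1 t2)
  then show ?thesis unfolding isCont_def eq[symmetric] by simp
qed

lemma energy_lower:
  fixes G :: "'a::{real_inner,complete_space} \<Rightarrow> 'a"
  assumes LG: "linear G" and SY: "\<And>u v. inner (G u) v = inner (G v) u"
    and NN: "\<And>v. 0 \<le> inner (G v) v" and KB: "\<And>v. inner (G v) v \<le> K * (norm v)\<^sup>2"
    and C: "\<gamma> \<in> C1_curves x1 x2"
  shows "inner (G (x2 - x1)) (x2 - x1) \<le> energy G \<gamma>"
proof -
  define e where "e = x2 - x1"
  define q where "q v = inner (G v) v" for v
  obtain \<gamma>' where D: "\<And>s. s \<in> {0..1} \<Longrightarrow> (\<gamma> has_vector_derivative \<gamma>' s) (at s within {0..1})"
    and cD: "continuous_on {0..1} \<gamma>'" and g0: "\<gamma> 0 = x1" and g1: "\<gamma> 1 = x2"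
    using C unfolding C1_curves_def by blast
  have vd: "vector_derivative \<gamma> (at s within {0..1}) = \<gamma>' s" if "s \<in> {0..1}" for s
    using vector_derivative_within_cbox[of 0 1 s \<gamma> "\<gamma>' s"] D[OF that] that by simp
  have en: "energy G \<gamma> = integral {0..1} (\<lambda>s. q (\<gamma>' s))"
    unfolding energy_def q_def by (rule Henstock_Kurzweil_Integration.integral_cong) (simp add: vd)
  have cq: "continuous_on {0..1} (\<lambda>s. q (\<gamma>' s))"
    unfolding q_def
    by (rule continuous_on_compose2[OF continuous_at_imp_continuous_on[of UNIV] cD])
       (auto intro: q_cont[OF LG SY NN KB])
  have "((\<lambda>s. inner (\<gamma>' s) (G e)) has_integral (inner (\<gamma> 1) (G e) - inner (\<gamma> 0) (G e))) {0..1}"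
    by (rule fundamental_theorem_of_calculus[where f="\<lambda>s. inner (\<gamma> s) (G e)"])
       (auto intro: bounded_linear.has_vector_derivative[OF bounded_linear_inner_left D])
  then have "((\<lambda>s. inner (\<gamma>' s) (G e)) has_integral inner (\<gamma> 1 - \<gamma> 0) (G e)) {0..1}"
    by (simp add: inner_diff_left)
  then have i1: "((\<lambda>s. inner (\<gamma>' s) (G e)) has_integral q e) {0..1}"
    using g0 g1 unfolding e_def q_def by (simp add: inner_commute)
  have i2: "((\<lambda>s. q e) has_integral q e) {0..1::real}"
    using has_integral_const_real[of "q e" 0 1] by simp
  have hi: "((\<lambda>s. 2 * inner (\<gamma>' s) (G e) - q e) has_integral (2 * q e - q e)) {0..1}"
    by (rule has_integral_diff[OF has_integral_mult_right[OF i1] i2])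
  have pt: "2 * inner (\<gamma>' s) (G e) - q e \<le> q (\<gamma>' s)" for s
  proof -
    have "0 \<le> q (\<gamma>' s + (- e))" unfolding q_def by (rule NN)
    also have "\<dots> = q (\<gamma>' s) + 2 * inner (G (\<gamma>' s)) (- e) + q (- e)"
      unfolding q_def by (rule q_expand[OF LG SY])
    also have "q (- e) = q e" unfolding q_def using LG by (simp add: linear_neg)
    also have "inner (G (\<gamma>' s)) (- e) = - inner (\<gamma>' s) (G e)"
      using SY[of "\<gamma>' s" e] by (simp add: inner_commute)
    finally show ?thesis by simp
  qed
  have "2 * q e - q e \<le> integral {0..1} (\<lambda>s. q (\<gamma>' s))"
    by (rule has_integral_le[OF hi integrable_integral[OF integrable_continuous_interval[OF cq]]]) (rule pt)
  then show ?thesis unfolding en e_def q_def by simp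
qed



lemma G_dist_eq:
  fixes G :: "'a::{real_inner,complete_space} \<Rightarrow> 'a"
  assumes LG: "linear G" and SY: "\<And>u v. inner (G u) v = inner (G v) u"
    and NN: "\<And>v. 0 \<le> inner (G v) v" and KB: "\<And>v. inner (G v) v \<le> K * (norm v)\<^sup>2"
  shows "G_dist G x1 x2 = sqrt (inner (G (x2 - x1)) (x2 - x1))"
proof -
  define e where "e = x2 - x1"
  define l where "l s = x1 + s *\<^sub>R e" for s :: real
  have ld: "(l has_vector_derivative e) (at s within {0..1})" for s
    unfolding l_def by (auto intro!: derivative_eq_intros)
  have lC: "l \<in> C1_curves x1 x2"
  proof -
    have "\<exists>\<gamma>'. (\<forall>s\<in>{0..1}. (l has_vector_derivative \<gamma>' s) (at s within {0..1})) \<and>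
          continuous_on {0..1} \<gamma>'"
      by (rule exI[where x="\<lambda>s. e"]) (simp add: ld)
    then show ?thesis unfolding C1_curves_def by (simp add: l_def e_def)
  qed
  have vd: "vector_derivative l (at s within {0..1}) = e" if "s \<in> {0..1}" for s
    using vector_derivative_within_cbox[of 0 1 s l e] ld[of s] that by simp
  have "energy G l = integral {0..1::real} (\<lambda>s. inner (G e) e)"
    unfolding energy_def
    by (rule Henstock_Kurzweil_Integration.integral_cong) (simp add: vd)
  also have "\<dots> = inner (G e) e" by simp
  finally have el: "energy G l = inner (G e) e" .
  have "Inf (energy G ` C1_curves x1 x2) = inner (G e) e"
  proof (rule cInf_eq_minimum)
    show "inner (G e) e \<in> energy G ` C1_curves x1 x2" using lC el by (metis imageI)
    show "\<And>y. y \<in> energy G ` C1_curves x1 x2 \<Longrightarrow> inner (G e) e \<le> y"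
      using energy_lower[OF LG SY NN KB] unfolding e_def by blast
  qed
  then show ?thesis unfolding G_dist_def e_def by simp
qed



lemma q_scale:
  fixes G :: "'a::real_inner \<Rightarrow> 'a"
  assumes LG: "linear G"
  shows "inner (G (c *\<^sub>R v)) (c *\<^sub>R v) = c\<^sup>2 * inner (G v) v"
  using LG by (simp add: linear_scale power2_eq_square)

lemma NV_bound:
  fixes V :: "'a::real_inner \<Rightarrow> 'w \<Rightarrow> real" and G :: "'a \<Rightarrow> 'a"
  assumes BL: "bounded_linear_L2 M V"
    and HG: "\<And>v u. inner (G v) u = L2_inner M (V v) (V u)"
  shows "sqrt (inner (G v) v) \<le> opnorm_V M V * norm v"
proof -
  have LG: "linear G" by (rule G_linear[OF BL HG])
  obtain K where K: "\<And>x. L2_norm M (V x) \<le> K * norm x"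
    using BL unfolding bounded_linear_L2_def by auto
  have bdd: "bdd_above {L2_norm M (V x) | x. norm x \<le> 1}"
  proof (rule bdd_aboveI)
    fix y assume "y \<in> {L2_norm M (V x) | x. norm x \<le> 1}"
    then obtain x where y: "y = L2_norm M (V x)" and x: "norm x \<le> 1" by auto
    have "K * norm x \<le> \<bar>K\<bar> * norm x" by (simp add: mult_right_mono)
    also have "\<dots> \<le> \<bar>K\<bar>" using x by (simp add: mult_left_le)
    finally show "y \<le> \<bar>K\<bar>" using K[of x] y by simp
  qed
  show ?thesis
  proof (cases "v = 0")
    case True
    then show ?thesis using LG by (simp add: linear_0)
  next
    case False
    define u where "u = (1 / norm v) *\<^sub>R v"
    have nu: "norm u = 1" using False by (simp add: u_def)
    have "sqrt (inner (G u) u) = sqrt ((1 / norm v)\<^sup>2 * inner (G v) v)"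
      unfolding u_def q_scale[OF LG] ..
    also have "\<dots> = sqrt (inner (G v) v) / norm v"
      by (simp add: real_sqrt_mult real_sqrt_divide)
    finally have equ: "sqrt (inner (G u) u) = sqrt (inner (G v) v) / norm v" .
    have "sqrt (inner (G u) u) \<le> opnorm_V M V"
      unfolding opnorm_V_def q_L2norm[OF HG, symmetric]
      by (rule cSup_upper[OF _ bdd]) (use nu in auto)
    then have "sqrt (inner (G v) v) / norm v \<le> opnorm_V M V" using equ by simp
    then show ?thesis using False by (simp add: divide_le_eq mult.commute)
  qed
qed

lemma NW_bound:
  fixes V :: "'a::real_inner \<Rightarrow> 'w \<Rightarrow> real" and G :: "'a \<Rightarrow> 'a"
  assumes BL: "bounded_linear_L2 M V" and IW: "inverse_L2 M V W"
    and HG: "\<And>v u. inner (G v) u = L2_inner M (V v) (V u)"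
  shows "norm v \<le> opnorm_W M W * sqrt (inner (G v) v)"
proof (cases "inner (G v) v = 0")
  case True
  then show ?thesis using q_zero[OF BL IW HG True] by simp
next
  case False
  have sq: "\<And>x. sq_int M (V x)" using BL unfolding bounded_linear_L2_def by auto
  obtain K where K: "\<And>f. sq_int M f \<Longrightarrow> norm (W f) \<le> K * L2_norm M f"
    using IW unfolding inverse_L2_def by blast
  have bdd: "bdd_above {norm (W f) | f. sq_int M f \<and> L2_norm M f \<le> 1}"
  proof (rule bdd_aboveI)
    fix y assume "y \<in> {norm (W f) | f. sq_int M f \<and> L2_norm M f \<le> 1}"
    then obtain f where y: "y = norm (W f)" and f: "sq_int M f" "L2_norm M f \<le> 1" by auto
    have n0: "0 \<le> L2_norm M f" unfolding L2_norm_def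
      by (simp add: Bochner_Integration.integral_nonneg)
    have "K * L2_norm M f \<le> \<bar>K\<bar> * L2_norm M f" using n0 by (simp add: mult_right_mono)
    also have "\<dots> \<le> \<bar>K\<bar>" using f n0 by (simp add: mult_left_le)
    finally show "y \<le> \<bar>K\<bar>" using K[OF f(1)] y by simp
  qed
  define N where "N = sqrt (inner (G v) v)"
  have Npos: "0 < N" using False q_nonneg[OF HG, of v] unfolding N_def by simp
  define f where "f w = (1 / N) * V v w" for w
  have sf: "sq_int M f" unfolding f_def by (rule sq_int_cmult[OF sq])
  have "(\<integral>w. (f w)\<^sup>2 \<partial>M) = (\<integral>w. (1 / N)\<^sup>2 * (V v w)\<^sup>2 \<partial>M)"
    unfolding f_def by (simp only: power_mult_distrib)
  also have "\<dots> = (1 / N)\<^sup>2 * (\<integral>w. (V v w)\<^sup>2 \<partial>M)"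
    by (rule integral_mult_right_zero)
  finally have "L2_norm M f = sqrt ((1 / N)\<^sup>2 * (\<integral>w. (V v w)\<^sup>2 \<partial>M))"
    unfolding L2_norm_def by simp
  also have "\<dots> = (1 / N) * N"
    using Npos unfolding N_def q_eq[OF HG] by (simp add: real_sqrt_mult)
  finally have Lf: "L2_norm M f = 1" using Npos by simp
  have Wsc: "\<And>c g. sq_int M g \<Longrightarrow> W (\<lambda>w. c * g w) = c *\<^sub>R W g"
    using IW unfolding inverse_L2_def by blast
  have WV: "\<And>x. W (V x) = x" using IW unfolding inverse_L2_def by blast
  have Wf: "W f = (1 / N) *\<^sub>R v"
    unfolding f_def using Wsc[OF sq[of v], of "1 / N"] WV[of v] by simp
  have "norm (W f) \<le> opnorm_W M W"
    unfolding opnorm_W_def by (rule cSup_upper[OF _ bdd]) (use sf Lf in auto)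
  then have "norm v / N \<le> opnorm_W M W" using Wf Npos by simp
  then show ?thesis using Npos unfolding N_def[symmetric] by (simp add: divide_le_eq mult.commute)
qed



theorem mainTheorem4:
  fixes M :: "'w measure"
    and V :: "'a::{real_inner, complete_space} \<Rightarrow> 'w \<Rightarrow> real"
    and W :: "('w \<Rightarrow> real) \<Rightarrow> 'a"
    and G :: "'a \<Rightarrow> 'a"
    and F :: "'a \<Rightarrow> real"
    and lt :: real
  assumes "separable_space (euclidean :: 'a topology)"
    and "bounded_linear_L2 M V"
    and "inverse_L2 M V W"
    and "\<And>v u. inner (G v) u = L2_inner M (V v) (V u)"
    and "lambda_convex lt F"
  shows "geod_lambda_convex (G_dist G)
           (if lt > 0 then lt / (opnorm_V M V)\<^sup>2 else lt * (opnorm_W M W)\<^sup>2) F"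
proof -
  note BL = assms(2) and IW = assms(3) and HG = assms(4) and LC = assms(5)
  have LG: "linear G" by (rule G_linear[OF BL HG])
  have SY: "\<And>u v. inner (G u) v = inner (G v) u" by (rule G_sym[OF HG])
  have NN: "\<And>v. 0 \<le> inner (G v) v" by (rule q_nonneg[OF HG])
  obtain K where KB: "\<And>v. inner (G v) v \<le> K * (norm v)\<^sup>2" using q_bound[OF BL HG] by blast
  define q where "q v = inner (G v) v" for v
  define lam where "lam = (if lt > 0 then lt / (opnorm_V M V)\<^sup>2 else lt * (opnorm_W M W)\<^sup>2)"
  have dist: "\<And>x y. G_dist G x y = sqrt (q (y - x))"
    unfolding q_def by (rule G_dist_eq[OF LG SY NN KB])
  have qn: "\<And>v. 0 \<le> q v" unfolding q_def by (rule NN)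
  have lamb: "lam * q v \<le> lt * (norm v)\<^sup>2" for v
  proof (cases "lt > 0")
    case True
    have "sqrt (q v) \<le> opnorm_V M V * norm v" unfolding q_def by (rule NV_bound[OF BL HG])
    then have "(sqrt (q v))\<^sup>2 \<le> (opnorm_V M V * norm v)\<^sup>2"
      using qn[of v] by (intro power_mono) auto
    then have h: "q v \<le> (opnorm_V M V)\<^sup>2 * (norm v)\<^sup>2" using qn[of v] by (simp add: power_mult_distrib)
    show ?thesis
    proof (cases "opnorm_V M V = 0")
      case True
      then show ?thesis using \<open>lt > 0\<close> unfolding lam_def by simp
    next
      case False
      then have p: "0 < (opnorm_V M V)\<^sup>2" by simp
      have "q v / (opnorm_V M V)\<^sup>2 \<le> (norm v)\<^sup>2" using h p by (simp add: divide_le_eq mult.commute)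
      then have "lt * (q v / (opnorm_V M V)\<^sup>2) \<le> lt * (norm v)\<^sup>2"
        using \<open>lt > 0\<close> by (intro mult_left_mono) auto
      then show ?thesis using \<open>lt > 0\<close> unfolding lam_def by simp
    qed
  next
    case False
    have "norm v \<le> opnorm_W M W * sqrt (q v)" unfolding q_def by (rule NW_bound[OF BL IW HG])
    then have "(norm v)\<^sup>2 \<le> (opnorm_W M W * sqrt (q v))\<^sup>2"
      by (intro power_mono) auto
    then have h: "(norm v)\<^sup>2 \<le> (opnorm_W M W)\<^sup>2 * q v" using qn[of v] by (simp add: power_mult_distrib)
    have "lt * ((opnorm_W M W)\<^sup>2 * q v) \<le> lt * (norm v)\<^sup>2"
      using False h by (intro mult_left_mono_neg) auto
    then show ?thesis using False unfolding lam_def by (simp add: mult.assoc)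
  qed
  have qexp: "q (c *\<^sub>R a + d *\<^sub>R b) = c\<^sup>2 * q a + 2 * c * d * inner (G a) b + d\<^sup>2 * q b" for a b c d
  proof -
    have "q (c *\<^sub>R a + d *\<^sub>R b) = q (c *\<^sub>R a) + 2 * inner (G (c *\<^sub>R a)) (d *\<^sub>R b) + q (d *\<^sub>R b)"
      unfolding q_def by (rule q_expand[OF LG SY])
    then show ?thesis unfolding q_def using LG by (simp add: q_scale[OF LG] linear_scale power2_eq_square)
  qed
  show ?thesis
    unfolding geod_lambda_convex_def lam_def[symmetric]
  proof (intro allI impI ballI)
    fix \<gamma> :: "real \<Rightarrow> 'a" and \<theta> :: real
    assume cs: "cs_geodesic (G_dist G) \<gamma>" and th: "\<theta> \<in> {0..1}"
    define x0 where "x0 = \<gamma> 0"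
    define x1 where "x1 = \<gamma> 1"
    define y where "y = \<gamma> \<theta>"
    define D where "D = G_dist G x0 x1"
    have D2: "D\<^sup>2 = q (x1 - x0)" unfolding D_def dist using qn by simp
    have "G_dist G x0 y = \<theta> * D"
      using cs th unfolding cs_geodesic_def x0_def y_def D_def x1_def by (metis abs_of_nonneg atLeastAtMost_iff diff_zero order_refl zero_le_one)
    then have "sqrt (q (y - x0)) = \<theta> * D" unfolding dist .
    then have qa: "q (y - x0) = \<theta>\<^sup>2 * D\<^sup>2" using qn by (metis power_mult_distrib real_sqrt_pow2)
    have "G_dist G y x1 = (1 - \<theta>) * D"
      using cs th unfolding cs_geodesic_def x0_def y_def D_def x1_def by (metis abs_of_nonneg atLeastAtMost_iff diff_ge_0_iff_ge order_refl zero_le_one)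
    then have "sqrt (q (x1 - y)) = (1 - \<theta>) * D" unfolding dist .
    then have qb: "q (x1 - y) = (1 - \<theta>)\<^sup>2 * D\<^sup>2" using qn by (metis power_mult_distrib real_sqrt_pow2)
    define a where "a = y - x0"
    define b where "b = x1 - y"
    define B where "B = inner (G a) b"
    have "q (1 *\<^sub>R a + 1 *\<^sub>R b) = q a + 2 * B + q b" unfolding B_def by (simp only: qexp) simp
    moreover have "1 *\<^sub>R a + 1 *\<^sub>R b = x1 - x0" unfolding a_def b_def by simp
    ultimately have "D\<^sup>2 = \<theta>\<^sup>2 * D\<^sup>2 + 2 * B + (1 - \<theta>)\<^sup>2 * D\<^sup>2"
      using qa qb D2 unfolding a_def b_def by simp
    then have BB: "B = \<theta> * (1 - \<theta>) * D\<^sup>2" by (simp add: algebra_simps power2_eq_square)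
    have "q ((1 - \<theta>) *\<^sub>R a + (- \<theta>) *\<^sub>R b) = (1 - \<theta>)\<^sup>2 * q a + 2 * (1 - \<theta>) * (- \<theta>) * B + (- \<theta>)\<^sup>2 * q b"
      unfolding B_def by (rule qexp)
    also have "\<dots> = 0" unfolding BB a_def b_def qa qb by (simp add: algebra_simps power2_eq_square)
    finally have "(1 - \<theta>) *\<^sub>R a + (- \<theta>) *\<^sub>R b = 0"
      unfolding q_def by (rule q_zero[OF BL IW HG])
    then have yeq: "y = (1 - \<theta>) *\<^sub>R x0 + \<theta> *\<^sub>R x1"
      unfolding a_def b_def by (simp add: algebra_simps)
    have "F y \<le> (1 - \<theta>) * F x0 + \<theta> * F x1 - lt * \<theta> * (1 - \<theta>) / 2 * (norm (x0 - x1))\<^sup>2"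
      using LC th unfolding lambda_convex_def yeq by blast
    moreover have "lam * \<theta> * (1 - \<theta>) / 2 * D\<^sup>2 \<le> lt * \<theta> * (1 - \<theta>) / 2 * (norm (x0 - x1))\<^sup>2"
    proof -
      have "lam * D\<^sup>2 \<le> lt * (norm (x0 - x1))\<^sup>2"
        using lamb[of "x1 - x0"] D2 by (simp add: norm_minus_commute)
      moreover have "0 \<le> \<theta> * (1 - \<theta>) / 2" using th by simp
      ultimately have "\<theta> * (1 - \<theta>) / 2 * (lam * D\<^sup>2) \<le> \<theta> * (1 - \<theta>) / 2 * (lt * (norm (x0 - x1))\<^sup>2)"
        by (rule mult_left_mono)
      then show ?thesis by (simp add: algebra_simps)
    qed
    ultimately show "F (\<gamma> \<theta>) \<le> (1 - \<theta>) * F (\<gamma> 0) + \<theta> * F (\<gamma> 1) - lam * \<theta> * (1 - \<theta>) / 2 * (G_dist G (\<gamma> 0) (\<gamma> 1))\<^sup>2"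
      unfolding y_def x0_def x1_def D_def by linarith
  qed
qed


end
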